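(* If $\Gamma ; \Delta \vdash \mathcal{C}$ in $\lambda_{\text{act}}$, then $[\![\Gamma]\!] ; [\![\Delta]\!] \vdash [\![\mathcal{C}]\!]$ in $\lambda_{\text{ch}}$.
   Context: $\lambda_{\text{act}}$ is a concurrent fine-grain call-by-value $\lambda$-calculus with actors: types $A ::= \mathbf{1} \mid A \to^{C} B \mid \mathsf{ActorRef}(A)$ (the annotation $C$ on an arrow is the mailbox type of the actor evaluating the function), computations include $\mathsf{spawn}\, M$, $\mathsf{send}\, V\, W$, $\mathsf{receive}$, $\mathsf{self}$; term judgements are $\Gamma \mid B \vdash M : A$ ($B$ the mailbox type). Configurations are $\mathcal{C} \parallel \mathcal{D}$, $(\nu a)\mathcal{C}$ and actors $\langle a, M, \vec{V}\rangle$ (name $a$, running $M$, mailbox $\vec V$), typed by $\Gamma;\Delta \vdash \mathcal{C}$ with $\Delta$ a linear environment mapping names to mailbox types (rules: Par splits $\Delta$; $(\nu a)\mathcal{C}$ typed if $\Gamma, a{:}\mathsf{ActorRef}(A); \Delta, a{:}A \vdash \mathcal{C}$; $\Gamma, a{:}\mathsf{ActorRef}(A); a{:}A \vdash \langle a,M,\vec V\rangle$ if $\Gamma, a{:}\mathsf{ActorRef}(A) \mid A \vdash M:\mathbf{1}$ and each $V_i : A$). $\lambda_{\text{ch}}$ is the analogous calculus with asynchronous channels: types $\mathbf{1} \mid A\to B \mid \mathsf{Chan}(A)$, primitives $\mathsf{fork}\,M$, $\mathsf{give}\,V\,W$, $\mathsf{take}\,V$, $\mathsf{newCh}$; configurations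 are parallel composition, $(\nu a)\mathcal{C}$, terms $M$ (typed with empty $\Delta$, $M:\mathbf{1}$) and buffers $a(\vec V)$ (typed $\Gamma; a{:}A \vdash a(\vec V)$ when each $V_i : A$), with $(\nu a)\mathcal{C}$ typed if $\Gamma, a{:}\mathsf{Chan}(A); \Delta, a{:}A \vdash \mathcal{C}$. The translation $[\![-]\!]$ from $\lambda_{\text{act}}$ to $\lambda_{\text{ch}}$: on types $[\![\mathsf{ActorRef}(A)]\!] = \mathsf{Chan}([\![A]\!])$, $[\![A \to^{C} B]\!] = [\![A]\!] \to \mathsf{Chan}([\![C]\!]) \to [\![B]\!]$, $[\![\mathbf{1}]\!]=\mathbf{1}$; on values $[\![\lambda x.M]\!] = \lambda x.\lambda ch.([\![M]\!]\, ch)$, identity otherwise; on terms, parameterised by a mailbox channel $ch$: $\mathsf{receive} \mapsto \mathsf{take}\, ch$, $\mathsf{self} \mapsto \mathsf{return}\, ch$, $\mathsf{send}\,V\,W \mapsto \mathsf{give}\,[\![V]\!]\,[\![W]\!]$, $\mathsf{spawn}\,M \mapsto$ create a new channel $chMb$, fork $[\![M]\!]\,chMb$, return $chMb$, application $V\,W \mapsto$ let $f \Leftarrow [\![V]\!]\,[\![W]\!]$ in $f\,ch$, homomorphic on let/return. On configurations the translation is homomorphic on $\parallel$ and $\nu$, and $[\![\langle a, M, \vec V\rangle]\!] = a([\![\vec V]\!]) \parallel ([\![M]\!]\, a)$ (mailbox becomes a buffer, $a$ used as the mailbox channel). Environments $\Gamma$ and $\Delta$ are translated pointwise on their types. *)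

theory Defs
  imports Main
begin

text \<open>Both calculi use de Bruijn indices for variables; actor/channel names are
  variables too (they live in \<Gamma>), and \<open>\<nu>\<close> is a binder for index 0.
  Linear environments \<Delta> are partial maps from indices to mailbox types.\<close>

datatype aty = AUnit | AFun aty aty aty (* AFun A C B  =  A \<rightarrow>^C B *) | ActorRef aty

datatype aval = AVar nat | ALam acomp | AUnitV
and acomp = AApp aval aval | ALet acomp acomp | AReturn aval
  | ASpawn acomp | ASend aval aval | AReceive | ASelf

inductive aval_t :: "aty list \<Rightarrow> aval \<Rightarrow> aty \<Rightarrow> bool"
  and acomp_t :: "aty list \<Rightarrow> aty \<Rightarrow> acomp \<Rightarrow> aty \<Rightarrow> bool"
  (* acomp_t \<Gamma> B M A  :  \<Gamma> | B \<turnstile> M : A ,  B the mailbox type *)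
where
  AT_Var: "n < length \<Gamma> \<Longrightarrow> aval_t \<Gamma> (AVar n) (\<Gamma> ! n)"
| AT_Lam: "acomp_t (A # \<Gamma>) C M B \<Longrightarrow> aval_t \<Gamma> (ALam M) (AFun A C B)"
| AT_Unit: "aval_t \<Gamma> AUnitV AUnit"
| AT_App: "aval_t \<Gamma> V (AFun A C B) \<Longrightarrow> aval_t \<Gamma> W A \<Longrightarrow> acomp_t \<Gamma> C (AApp V W) B"
| AT_Let: "acomp_t \<Gamma> C M A \<Longrightarrow> acomp_t (A # \<Gamma>) C N B \<Longrightarrow> acomp_t \<Gamma> C (ALet M N) B"
| AT_Return: "aval_t \<Gamma> V A \<Longrightarrow> acomp_t \<Gamma> C (AReturn V) A"
| AT_Spawn: "acomp_t \<Gamma> A M AUnit \<Longrightarrow> acomp_t \<Gamma> C (ASpawn M) (ActorRef A)"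
| AT_Send: "aval_t \<Gamma> V A \<Longrightarrow> aval_t \<Gamma> W (ActorRef A) \<Longrightarrow> acomp_t \<Gamma> C (ASend V W) AUnit"
| AT_Receive: "acomp_t \<Gamma> A AReceive A"
| AT_Self: "acomp_t \<Gamma> A ASelf (ActorRef A)"

datatype acfg = APar acfg acfg | ANu acfg | AActor nat acomp "aval list"

definition disjoint_dom :: "(nat \<Rightarrow> 'a option) \<Rightarrow> (nat \<Rightarrow> 'a option) \<Rightarrow> bool" where
  "disjoint_dom D1 D2 \<longleftrightarrow> dom D1 \<inter> dom D2 = {}"

definition bind0 :: "'a \<Rightarrow> (nat \<Rightarrow> 'a option) \<Rightarrow> (nat \<Rightarrow> 'a option)" where
  "bind0 A D = (\<lambda>n. case n of 0 \<Rightarrow> Some A | Suc k \<Rightarrow> D k)"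

inductive acfg_t :: "aty list \<Rightarrow> (nat \<Rightarrow> aty option) \<Rightarrow> acfg \<Rightarrow> bool" where
  ACT_Par: "acfg_t \<Gamma> D1 C1 \<Longrightarrow> acfg_t \<Gamma> D2 C2 \<Longrightarrow> disjoint_dom D1 D2
            \<Longrightarrow> acfg_t \<Gamma> (D1 ++ D2) (APar C1 C2)"
| ACT_Nu: "acfg_t (ActorRef A # \<Gamma>) (bind0 A D) C \<Longrightarrow> acfg_t \<Gamma> D (ANu C)"
| ACT_Actor: "a < length \<Gamma> \<Longrightarrow> \<Gamma> ! a = ActorRef A \<Longrightarrow> acomp_t \<Gamma> A M AUnit
     \<Longrightarrow> (\<forall>V \<in> set Vs. aval_t \<Gamma> V A)
     \<Longrightarrow> acfg_t \<Gamma> [a \<mapsto> A] (AActor a M Vs)"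

datatype cty = CUnit | CFun cty cty | Chan cty

datatype cval = CVar nat | CLam ccomp | CUnitV
and ccomp = CApp cval cval | CLet ccomp ccomp | CReturn cval
  | CFork ccomp | CGive cval cval | CTake cval | CNewCh

inductive cval_t :: "cty list \<Rightarrow> cval \<Rightarrow> cty \<Rightarrow> bool"
  and ccomp_t :: "cty list \<Rightarrow> ccomp \<Rightarrow> cty \<Rightarrow> bool"
where
  CT_Var: "n < length \<Gamma> \<Longrightarrow> cval_t \<Gamma> (CVar n) (\<Gamma> ! n)"
| CT_Lam: "ccomp_t (A # \<Gamma>) M B \<Longrightarrow> cval_t \<Gamma> (CLam M) (CFun A B)"
| CT_Unit: "cval_t \<Gamma> CUnitV CUnit"
| CT_App: "cval_t \<Gamma> V (CFun A B) \<Longrightarrow> cval_t \<Gamma> W A \<Longrightarrow> ccomp_t \<Gamma> (CApp V W) B"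
| CT_Let: "ccomp_t \<Gamma> M A \<Longrightarrow> ccomp_t (A # \<Gamma>) N B \<Longrightarrow> ccomp_t \<Gamma> (CLet M N) B"
| CT_Return: "cval_t \<Gamma> V A \<Longrightarrow> ccomp_t \<Gamma> (CReturn V) A"
| CT_Fork: "ccomp_t \<Gamma> M CUnit \<Longrightarrow> ccomp_t \<Gamma> (CFork M) CUnit"
| CT_Give: "cval_t \<Gamma> V A \<Longrightarrow> cval_t \<Gamma> W (Chan A) \<Longrightarrow> ccomp_t \<Gamma> (CGive V W) CUnit"
| CT_Take: "cval_t \<Gamma> V (Chan A) \<Longrightarrow> ccomp_t \<Gamma> (CTake V) A"
| CT_NewCh: "ccomp_t \<Gamma> CNewCh (Chan A)"

datatype ccfg = CPar ccfg ccfg | CNu ccfg | CTerm ccomp | CBuf nat "cval list"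

inductive ccfg_t :: "cty list \<Rightarrow> (nat \<Rightarrow> cty option) \<Rightarrow> ccfg \<Rightarrow> bool" where
  CCT_Par: "ccfg_t \<Gamma> D1 C1 \<Longrightarrow> ccfg_t \<Gamma> D2 C2 \<Longrightarrow> disjoint_dom D1 D2
            \<Longrightarrow> ccfg_t \<Gamma> (D1 ++ D2) (CPar C1 C2)"
| CCT_Nu: "ccfg_t (Chan A # \<Gamma>) (bind0 A D) C \<Longrightarrow> ccfg_t \<Gamma> D (CNu C)"
| CCT_Term: "ccomp_t \<Gamma> M CUnit \<Longrightarrow> ccfg_t \<Gamma> Map.empty (CTerm M)"
| CCT_Buf: "(\<forall>V \<in> set Vs. cval_t \<Gamma> V A) \<Longrightarrow> ccfg_t \<Gamma> [a \<mapsto> A] (CBuf a Vs)"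

fun tr_ty :: "aty \<Rightarrow> cty" where
  "tr_ty AUnit = CUnit"
| "tr_ty (ActorRef A) = Chan (tr_ty A)"
| "tr_ty (AFun A C B) = CFun (tr_ty A) (CFun (Chan (tr_ty C)) (tr_ty B))"

definition ext_ren :: "(nat \<Rightarrow> nat) \<Rightarrow> nat \<Rightarrow> nat" where
  "ext_ren \<rho> n = (case n of 0 \<Rightarrow> 0 | Suc m \<Rightarrow> Suc (\<rho> m))"

text \<open>\<open>tr_v \<rho> V\<close> / \<open>tr_c \<rho> ch M\<close>: the translation of the paper, fused with a
  renaming \<rho> of the free variables of the source term (needed in de Bruijn form
  because the translation introduces new binders: the \<open>ch\<close> parameter of a
  lambda, the \<open>f\<close> of an application, the \<open>chMb\<close> of a spawn).
  \<open>ch\<close> is the index of the mailbox channel variable in the target context.\<close>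
primrec tr_v :: "(nat \<Rightarrow> nat) \<Rightarrow> aval \<Rightarrow> cval"
  and tr_c :: "(nat \<Rightarrow> nat) \<Rightarrow> nat \<Rightarrow> acomp \<Rightarrow> ccomp" where
  "tr_v \<rho> (AVar n) = CVar (\<rho> n)"
| "tr_v \<rho> AUnitV = CUnitV"
| "tr_v \<rho> (ALam M) = CLam (CReturn (CLam (tr_c (\<lambda>n. Suc (ext_ren \<rho> n)) 0 M)))"
    (* \<lambda>x. return (\<lambda>ch. [[M]] ch)  (fine-grain: a function body is a computation) *)
| "tr_c \<rho> ch (AApp V W) = CLet (CApp (tr_v \<rho> V) (tr_v \<rho> W)) (CApp (CVar 0) (CVar (Suc ch)))"
    (* let f \<Leftarrow> [[V]] [[W]] in f ch *)
| "tr_c \<rho> ch (ALet M N) = CLet (tr_c \<rho> ch M) (tr_c (ext_ren \<rho>) (Suc ch) N)"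
| "tr_c \<rho> ch (AReturn V) = CReturn (tr_v \<rho> V)"
| "tr_c \<rho> ch (ASpawn M) = CLet CNewCh (CLet (CFork (tr_c (\<lambda>n. Suc (\<rho> n)) 0 M)) (CReturn (CVar 1)))"
    (* let chMb \<Leftarrow> newCh in let _ \<Leftarrow> fork ([[M]] chMb) in return chMb *)
| "tr_c \<rho> ch (ASend V W) = CGive (tr_v \<rho> V) (tr_v \<rho> W)"
| "tr_c \<rho> ch AReceive = CTake (CVar ch)"
| "tr_c \<rho> ch ASelf = CReturn (CVar ch)"

definition tr_val :: "aval \<Rightarrow> cval" where "tr_val = tr_v id"
definition tr_comp :: "nat \<Rightarrow> acomp \<Rightarrow> ccomp" where "tr_comp ch M = tr_c id ch M"

fun tr_cfg :: "acfg \<Rightarrow> ccfg" where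
  "tr_cfg (APar C D) = CPar (tr_cfg C) (tr_cfg D)"
| "tr_cfg (ANu C) = CNu (tr_cfg C)"
| "tr_cfg (AActor a M Vs) = CPar (CBuf a (map tr_val Vs)) (CTerm (tr_comp a M))"

definition tr_env :: "aty list \<Rightarrow> cty list" where "tr_env \<Gamma> = map tr_ty \<Gamma>"
definition tr_lenv :: "(nat \<Rightarrow> aty option) \<Rightarrow> (nat \<Rightarrow> cty option)" where
  "tr_lenv D = map_option tr_ty \<circ> D"

end

theory Submission
  imports Defs
begin

lemma tr_term:
  "(aval_t \<Gamma> V A \<longrightarrow> (\<forall>\<Gamma>' \<rho>. (\<forall>n < length \<Gamma>. \<rho> n < length \<Gamma>' \<and> \<Gamma>' ! \<rho> n = tr_ty (\<Gamma> ! n))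
      \<longrightarrow> cval_t \<Gamma>' (tr_v \<rho> V) (tr_ty A))) \<and>
   (acomp_t \<Gamma> B M A \<longrightarrow> (\<forall>\<Gamma>' \<rho> ch. (\<forall>n < length \<Gamma>. \<rho> n < length \<Gamma>' \<and> \<Gamma>' ! \<rho> n = tr_ty (\<Gamma> ! n))
      \<longrightarrow> ch < length \<Gamma>' \<longrightarrow> \<Gamma>' ! ch = Chan (tr_ty B)
      \<longrightarrow> ccomp_t \<Gamma>' (tr_c \<rho> ch M) (tr_ty A)))"
proof (induction rule: aval_t_acomp_t.induct)
  case (AT_Var n \<Gamma>)
  show ?case
  proof (intro allI impI)
    fix \<Gamma>' \<rho> assume h: "\<forall>n<length \<Gamma>. \<rho> n < length \<Gamma>' \<and> \<Gamma>' ! \<rho> n = tr_ty (\<Gamma> ! n)"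
    then have "\<rho> n < length \<Gamma>'" "\<Gamma>' ! \<rho> n = tr_ty (\<Gamma> ! n)" using AT_Var by auto
    then show "cval_t \<Gamma>' (tr_v \<rho> (AVar n)) (tr_ty (\<Gamma> ! n))"
      using CT_Var[of "\<rho> n" \<Gamma>'] by simp
  qed
next
  case (AT_Lam A \<Gamma> C M B)
  show ?case
  proof (intro allI impI)
    fix \<Gamma>' \<rho> assume h: "\<forall>n<length \<Gamma>. \<rho> n < length \<Gamma>' \<and> \<Gamma>' ! \<rho> n = tr_ty (\<Gamma> ! n)"
    let ?G = "Chan (tr_ty C) # tr_ty A # \<Gamma>'"
    have "\<forall>n<length (A # \<Gamma>). (\<lambda>n. Suc (ext_ren \<rho> n)) n < length ?G \<and> ?G ! (\<lambda>n. Suc (ext_ren \<rho> n)) n = tr_ty ((A # \<Gamma>) ! n)"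
      using h by (auto simp: ext_ren_def split: nat.splits)
    then have "ccomp_t ?G (tr_c (\<lambda>n. Suc (ext_ren \<rho> n)) 0 M) (tr_ty B)"
      using AT_Lam.IH by auto
    then show "cval_t \<Gamma>' (tr_v \<rho> (ALam M)) (tr_ty (AFun A C B))"
      by (auto intro!: cval_t_ccomp_t.intros)
  qed
next
  case (AT_Unit \<Gamma>)
  then show ?case using CT_Unit by simp
next
  case (AT_App \<Gamma> V A C B W)
  show ?case
  proof (intro allI impI)
    fix \<Gamma>' \<rho> ch assume h: "\<forall>n<length \<Gamma>. \<rho> n < length \<Gamma>' \<and> \<Gamma>' ! \<rho> n = tr_ty (\<Gamma> ! n)"
      and c1: "ch < length \<Gamma>'" and c2: "\<Gamma>' ! ch = Chan (tr_ty C)"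
    have v: "cval_t \<Gamma>' (tr_v \<rho> V) (CFun (tr_ty A) (CFun (Chan (tr_ty C)) (tr_ty B)))"
      using AT_App.IH(1) h by fastforce
    have w: "cval_t \<Gamma>' (tr_v \<rho> W) (tr_ty A)" using AT_App.IH(2) h by blast
    let ?F = "CFun (Chan (tr_ty C)) (tr_ty B)"
    have a: "ccomp_t \<Gamma>' (CApp (tr_v \<rho> V) (tr_v \<rho> W)) ?F"
      using v w by (rule CT_App)
    have b: "ccomp_t (?F # \<Gamma>') (CApp (CVar 0) (CVar (Suc ch))) (tr_ty B)"
      apply (rule CT_App[where A="Chan (tr_ty C)"])
      using CT_Var[of 0 "?F # \<Gamma>'"] apply simp
      using CT_Var[of "Suc ch" "?F # \<Gamma>'"] c1 c2 by simp
    show "ccomp_t \<Gamma>' (tr_c \<rho> ch (AApp V W)) (tr_ty B)"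
      using CT_Let[OF a b] by simp
  qed
next
  case (AT_Let \<Gamma> C M A N B)
  show ?case
  proof (intro allI impI)
    fix \<Gamma>' \<rho> ch assume h: "\<forall>n<length \<Gamma>. \<rho> n < length \<Gamma>' \<and> \<Gamma>' ! \<rho> n = tr_ty (\<Gamma> ! n)"
      and c1: "ch < length \<Gamma>'" and c2: "\<Gamma>' ! ch = Chan (tr_ty C)"
    have a: "ccomp_t \<Gamma>' (tr_c \<rho> ch M) (tr_ty A)" using AT_Let.IH(1) h c1 c2 by blast
    have "\<forall>n<length (A # \<Gamma>). ext_ren \<rho> n < length (tr_ty A # \<Gamma>') \<and> (tr_ty A # \<Gamma>') ! ext_ren \<rho> n = tr_ty ((A # \<Gamma>) ! n)"
      using h by (auto simp: ext_ren_def split: nat.splits)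
    then have b: "ccomp_t (tr_ty A # \<Gamma>') (tr_c (ext_ren \<rho>) (Suc ch) N) (tr_ty B)"
      using AT_Let.IH(2) c1 c2 by simp
    show "ccomp_t \<Gamma>' (tr_c \<rho> ch (ALet M N)) (tr_ty B)"
      using CT_Let[OF a b] by simp
  qed
next
  case (AT_Return \<Gamma> V A C)
  show ?case
  proof (intro allI impI)
    fix \<Gamma>' \<rho> ch assume h: "\<forall>n<length \<Gamma>. \<rho> n < length \<Gamma>' \<and> \<Gamma>' ! \<rho> n = tr_ty (\<Gamma> ! n)"
    have "cval_t \<Gamma>' (tr_v \<rho> V) (tr_ty A)" using AT_Return.IH h by blast
    then show "ccomp_t \<Gamma>' (tr_c \<rho> ch (AReturn V)) (tr_ty A)" using CT_Return by simp
  qed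
next
  case (AT_Spawn \<Gamma> A M C)
  show ?case
  proof (intro allI impI)
    fix \<Gamma>' \<rho> ch assume h: "\<forall>n<length \<Gamma>. \<rho> n < length \<Gamma>' \<and> \<Gamma>' ! \<rho> n = tr_ty (\<Gamma> ! n)"
    let ?G = "Chan (tr_ty A) # \<Gamma>'"
    have "\<forall>n<length \<Gamma>. Suc (\<rho> n) < length ?G \<and> ?G ! Suc (\<rho> n) = tr_ty (\<Gamma> ! n)"
      using h by auto
    then have m: "ccomp_t ?G (tr_c (\<lambda>n. Suc (\<rho> n)) 0 M) CUnit"
      using AT_Spawn.IH[rule_format, of "\<lambda>n. Suc (\<rho> n)" ?G 0] by simp
    have r: "ccomp_t (CUnit # ?G) (CReturn (CVar 1)) (Chan (tr_ty A))"
      using CT_Return[OF CT_Var[of 1 "CUnit # ?G"]] by simp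
    have f: "ccomp_t ?G (CLet (CFork (tr_c (\<lambda>n. Suc (\<rho> n)) 0 M)) (CReturn (CVar 1))) (Chan (tr_ty A))"
      using CT_Let[OF CT_Fork[OF m] r] .
    show "ccomp_t \<Gamma>' (tr_c \<rho> ch (ASpawn M)) (tr_ty (ActorRef A))"
      using CT_Let[OF CT_NewCh f] by simp
  qed
next
  case (AT_Send \<Gamma> V A W C)
  show ?case
  proof (intro allI impI)
    fix \<Gamma>' \<rho> ch assume h: "\<forall>n<length \<Gamma>. \<rho> n < length \<Gamma>' \<and> \<Gamma>' ! \<rho> n = tr_ty (\<Gamma> ! n)"
    have v: "cval_t \<Gamma>' (tr_v \<rho> V) (tr_ty A)" using AT_Send.IH(1) h by blast
    have w: "cval_t \<Gamma>' (tr_v \<rho> W) (Chan (tr_ty A))" using AT_Send.IH(2) h by fastforce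
    show "ccomp_t \<Gamma>' (tr_c \<rho> ch (ASend V W)) (tr_ty AUnit)" using CT_Give[OF v w] by simp
  qed
next
  case (AT_Receive \<Gamma> A)
  show ?case
  proof (intro allI impI)
    fix \<Gamma>' :: "cty list" and \<rho> :: "nat \<Rightarrow> nat" and ch
    assume a: "ch < length \<Gamma>'" "\<Gamma>' ! ch = Chan (tr_ty A)"
    have "cval_t \<Gamma>' (CVar ch) (Chan (tr_ty A))" using CT_Var[OF a(1)] a(2) by simp
    then show "ccomp_t \<Gamma>' (tr_c \<rho> ch AReceive) (tr_ty A)"
      using CT_Take by simp
  qed
next
  case (AT_Self \<Gamma> A)
  show ?case
  proof (intro allI impI)
    fix \<Gamma>' :: "cty list" and \<rho> :: "nat \<Rightarrow> nat" and ch
    assume a: "ch < length \<Gamma>'" "\<Gamma>' ! ch = Chan (tr_ty A)"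
    have "cval_t \<Gamma>' (CVar ch) (Chan (tr_ty A))" using CT_Var[OF a(1)] a(2) by simp
    then show "ccomp_t \<Gamma>' (tr_c \<rho> ch ASelf) (tr_ty (ActorRef A))"
      using CT_Return by simp
  qed
qed

lemma tr_v_t: "aval_t \<Gamma> V A \<Longrightarrow> (\<forall>n < length \<Gamma>. \<rho> n < length \<Gamma>' \<and> \<Gamma>' ! \<rho> n = tr_ty (\<Gamma> ! n))
      \<Longrightarrow> cval_t \<Gamma>' (tr_v \<rho> V) (tr_ty A)"
  using tr_term[THEN conjunct1, rule_format] by metis

lemma tr_c_t: "acomp_t \<Gamma> B M A \<Longrightarrow> (\<forall>n < length \<Gamma>. \<rho> n < length \<Gamma>' \<and> \<Gamma>' ! \<rho> n = tr_ty (\<Gamma> ! n))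
      \<Longrightarrow> ch < length \<Gamma>' \<Longrightarrow> \<Gamma>' ! ch = Chan (tr_ty B)
      \<Longrightarrow> ccomp_t \<Gamma>' (tr_c \<rho> ch M) (tr_ty A)"
  using tr_term[THEN conjunct2, rule_format] by metis

lemma tr_lenv_add: "tr_lenv (D1 ++ D2) = tr_lenv D1 ++ tr_lenv D2"
  by (rule ext) (auto simp: tr_lenv_def map_add_def split: option.splits)

lemma tr_lenv_bind0: "tr_lenv (bind0 A D) = bind0 (tr_ty A) (tr_lenv D)"
  by (rule ext) (auto simp: tr_lenv_def bind0_def split: nat.splits)

theorem theorem18:
  assumes "acfg_t \<Gamma> \<Delta> \<C>"
  shows "ccfg_t (tr_env \<Gamma>) (tr_lenv \<Delta>) (tr_cfg \<C>)"
  using assms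
proof (induction rule: acfg_t.induct)
  case (ACT_Par \<Gamma> D1 C1 D2 C2)
  have "disjoint_dom (tr_lenv D1) (tr_lenv D2)"
    using ACT_Par.hyps(3) by (auto simp: disjoint_dom_def tr_lenv_def)
  then show ?case using CCT_Par[OF ACT_Par.IH] by (simp add: tr_lenv_add)
next
  case (ACT_Nu A \<Gamma> D C)
  then show ?case by (auto simp: tr_lenv_bind0 tr_env_def intro!: CCT_Nu)
next
  case (ACT_Actor a \<Gamma> A M Vs)
  let ?G = "tr_env \<Gamma>"
  have h: "\<forall>n<length \<Gamma>. id n < length ?G \<and> ?G ! id n = tr_ty (\<Gamma> ! n)"
    by (simp add: tr_env_def)
  have m: "ccomp_t ?G (tr_comp a M) CUnit"
    unfolding tr_comp_def using tr_c_t[OF ACT_Actor(3) h, of a] ACT_Actor(1,2)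
    by (simp add: tr_env_def id_def)
  have vs: "\<forall>V\<in>set (map tr_val Vs). cval_t ?G V (tr_ty A)"
    using tr_v_t[OF _ h] ACT_Actor(4) unfolding tr_val_def by (auto simp: id_def)
  have "ccfg_t ?G ([a \<mapsto> tr_ty A] ++ Map.empty) (CPar (CBuf a (map tr_val Vs)) (CTerm (tr_comp a M)))"
    by (rule CCT_Par[OF CCT_Buf[OF vs] CCT_Term[OF m]]) (simp add: disjoint_dom_def)
  moreover have "tr_lenv [a \<mapsto> A] = [a \<mapsto> tr_ty A]"
    by (rule ext) (auto simp: tr_lenv_def)
  ultimately show ?case by (simp only: tr_cfg.simps map_add_empty)
qed

end
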